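(* Let $d \geq 2$ and let $\Gamma \leq \operatorname{GL}_d(\mathbb{Z})$ be a subgroup such that the linear action of $\Gamma$ on $\mathbb{R}^d$ is irreducible and $\Gamma$ is generated by a finite set of unipotent matrices. Then for every $v \in \mathbb{Z}^d \setminus \{0\}$ there exist a sequence $\gamma_1, \gamma_2, \ldots \in \Gamma$ and polynomials $p_1(t), \ldots, p_d(t) \in \mathbb{Z}[t]$ such that $\gamma_n v = (p_1(n), \ldots, p_d(n))$ for all $n \geq 1$, and $1, p_1(t), \ldots, p_d(t)$ are linearly independent (i.e., no non-trivial linear combination of $p_1, \ldots, p_d$ is constant). In particular the sequence $(\gamma_n v)_n$ is not contained in any proper affine subspace of $\mathbb{R}^d$. *)

theory Defs
  imports "HOL-Analysis.Analysis" "HOL-Computational_Algebra.Polynomial"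
begin

definition GL_int :: "(int^'n^'n) set" where
  "GL_int = {A. \<exists>B. A ** B = mat 1 \<and> B ** A = mat 1}"

definition is_subgroup_GL :: "(int^'n^'n) set \<Rightarrow> bool" where
  "is_subgroup_GL H \<longleftrightarrow> H \<subseteq> GL_int \<and> mat 1 \<in> H \<and>
     (\<forall>A\<in>H. \<forall>B\<in>H. A ** B \<in> H) \<and>
     (\<forall>A\<in>H. \<exists>B\<in>H. A ** B = mat 1 \<and> B ** A = mat 1)"

definition generated_GL :: "(int^'n^'n) set \<Rightarrow> (int^'n^'n) set" where
  "generated_GL S = \<Inter>{H. is_subgroup_GL H \<and> S \<subseteq> H}"

definition unipotent :: "int^'n^'n \<Rightarrow> bool" where
  "unipotent A \<longleftrightarrow> (\<exists>k. ((\<lambda>M. (A - mat 1) ** M) ^^ k) (mat 1) = 0)"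

definition real_mat :: "int^'n^'n \<Rightarrow> real^'n^'n" where
  "real_mat A = (\<chi> i j. real_of_int (A $ i $ j))"

definition irreducible_action :: "(int^'n^'n) set \<Rightarrow> bool" where
  "irreducible_action G \<longleftrightarrow>
     (\<forall>W::(real^'n) set. subspace W \<and> (\<forall>g\<in>G. \<forall>w\<in>W. real_mat g *v w \<in> W)
        \<longrightarrow> W = {0} \<or> W = UNIV)"

end

theory Submission
  imports Defs
begin


definition rv :: "int^'n \<Rightarrow> real^'n" where
  "rv w = (\<chi> i. real_of_int (w$i))"

lemma rv_mult: "rv (A *v w) = real_mat A *v rv w"
  by (simp add: rv_def real_mat_def matrix_vector_mult_def vec_eq_iff)

lemma rv_inj: "rv a = rv b \<Longrightarrow> a = b"
  by (simp add: rv_def vec_eq_iff)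

lemma real_mat_mult: "real_mat (A ** B) = real_mat A ** real_mat B"
  by (simp add: real_mat_def matrix_matrix_mult_def vec_eq_iff)

lemma real_mat_one: "real_mat (mat 1) = mat 1"
  by (simp add: real_mat_def mat_def vec_eq_iff)

lemma real_mat_diff: "real_mat (A - B) = real_mat A - real_mat B"
  by (simp add: real_mat_def vec_eq_iff)

lemma real_mat_add: "real_mat (A + B) = real_mat A + real_mat B"
  by (simp add: real_mat_def vec_eq_iff)

definition mp :: "'a::semiring_1^'n^'n \<Rightarrow> nat \<Rightarrow> 'a^'n^'n" where
  "mp A k = ((\<lambda>M. A ** M) ^^ k) (mat 1)"

lemma mp_0[simp]: "mp A 0 = mat 1" by (simp add: mp_def)
lemma mp_Suc: "mp A (Suc k) = A ** mp A k" by (simp add: mp_def)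

lemma mp_add: "mp A (a + b) = mp A a ** mp A b"
  by (induction a) (simp_all add: mp_Suc matrix_mul_assoc)

lemma mp_zero_ge: "mp A D = 0 \<Longrightarrow> D \<le> k \<Longrightarrow> mp A k = 0"
  using mp_add[of A "k - D" D] by simp

lemma real_mat_mp: "real_mat (mp A k) = mp (real_mat A) k"
  by (induction k) (simp_all add: mp_Suc real_mat_mult real_mat_one)

lemma unipotent_mp: "unipotent A \<longleftrightarrow> (\<exists>k. mp (A - mat 1) k = 0)"
  by (simp add: unipotent_def mp_def)

lemma binom_vec:
  fixes N :: "real^'n^'n"
  assumes "mp N D = 0"
  shows "mp (mat 1 + N) m *v w = (\<Sum>k<D. real (m choose k) *\<^sub>R (mp N k *v w))"
proof -
  have "mp N (Suc D) = 0" using mp_zero_ge[OF assms] by simp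
  have main: "mp N (Suc D') = 0 \<Longrightarrow> mp (mat 1 + N) m *v w = (\<Sum>k<Suc D'. real (m choose k) *\<^sub>R (mp N k *v w))" for D'
  proof (induction m)
    case 0
    then show ?case by (simp add: sum.lessThan_Suc_shift del: sum.lessThan_Suc)
  next
    case (Suc m)
    have lin: "N *v (\<Sum>k<Suc D'. real (m choose k) *\<^sub>R (mp N k *v w)) =
        (\<Sum>k<Suc D'. real (m choose k) *\<^sub>R (mp N (Suc k) *v w))"
      by (simp add: vec.sum mp_Suc matrix_vector_mul_assoc matrix_vector_mult_scaleR del: sum.lessThan_Suc)
    have z: "mp N (Suc D') *v w = 0" using Suc.prems by simp
    have "mp (mat 1 + N) (Suc m) *v w = (mat 1 + N) *v (mp (mat 1 + N) m *v w)"
      by (simp add: mp_Suc matrix_vector_mul_assoc)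
    also have "\<dots> = (\<Sum>k<Suc D'. real (m choose k) *\<^sub>R (mp N k *v w)) +
        (\<Sum>k<Suc D'. real (m choose k) *\<^sub>R (mp N (Suc k) *v w))"
      using Suc.IH[OF Suc.prems] lin by (simp add: matrix_vector_mult_add_rdistrib)
    also have "\<dots> = (\<Sum>k<Suc D'. real (Suc m choose k) *\<^sub>R (mp N k *v w))"
    proof -
      define x where "x k = mp N k *v w" for k
      define b where "b k = real (m choose k)" for k
      have A: "(\<Sum>k<Suc D'. b k *\<^sub>R x k) = x 0 + (\<Sum>i<D'. b (Suc i) *\<^sub>R x (Suc i))"
        by (subst sum.lessThan_Suc_shift) (simp add: b_def x_def add.commute)
      have B: "(\<Sum>k<Suc D'. b k *\<^sub>R x (Suc k)) = (\<Sum>i<D'. b i *\<^sub>R x (Suc i))"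
        using z by (simp add: x_def)
      have C: "(\<Sum>k<Suc D'. real (Suc m choose k) *\<^sub>R x k) =
          x 0 + (\<Sum>i<D'. (b (Suc i) + b i) *\<^sub>R x (Suc i))"
        by (subst sum.lessThan_Suc_shift) (simp add: b_def x_def add.commute)
      show ?thesis
        using A B C unfolding x_def[symmetric] b_def[symmetric]
        by (simp add: scaleR_add_left sum.distrib)
    qed
    finally show ?case .
  qed
  have "mp (mat 1 + N) m *v w = (\<Sum>k<Suc D. real (m choose k) *\<^sub>R (mp N k *v w))"
    using main[OF \<open>mp N (Suc D) = 0\<close>] .
  also have "\<dots> = (\<Sum>k<D. real (m choose k) *\<^sub>R (mp N k *v w))"
    using assms by simp
  finally show ?thesis .
qed



lemma poly_of_int_eval: "poly (map_poly of_int p) (of_int x :: real) = of_int (poly p x)"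
  by (induct p) (simp_all add: map_poly_pCons)

lemma rpoly_eqI:
  fixes p q :: "real poly"
  assumes "\<And>x::int. poly p (of_int x) = poly q (of_int x)"
  shows "p = q"
proof (rule ccontr)
  assume "p \<noteq> q"
  then have "p - q \<noteq> 0" by simp
  then have f: "finite {x. poly (p - q) x = 0}" by (rule poly_roots_finite)
  have "range (of_int::int\<Rightarrow>real) \<subseteq> {x. poly (p - q) x = 0}" using assms by auto
  with f have "finite (range (of_int::int\<Rightarrow>real))" using finite_subset by blast
  moreover have "inj (of_int::int\<Rightarrow>real)" by (simp add: inj_on_def)
  ultimately have "finite (UNIV::int set)" using finite_imageD by blast
  then show False by simp
qed

definition bp :: "nat \<Rightarrow> nat \<Rightarrow> int poly" where
  "bp K k = (if k = 0 then 1 else smult (int K div fact k) ([:0,1:] * (\<Prod>i\<in>{1..<k}. [:- int i, int K:])))"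

lemma real_choose_prod: "real (n choose k) = (\<Prod>i=0..<k. real n - real i) / fact k"
  by (simp add: binomial_gbinomial gbinomial_prod_rev)

lemma bp_eval:
  assumes "fact k dvd K"
  shows "poly (bp K k) (int y) = int (K*y choose k)"
proof (cases "k = 0")
  case True then show ?thesis by (simp add: bp_def)
next
  case False
  have dv: "(fact k :: int) dvd int K" using assms
    by (metis of_nat_dvd_iff of_nat_fact)
  have fk: "real_of_int (int K div fact k) = real K / fact k"
    using dv by (simp add: real_of_int_div)
  have "real_of_int (poly (bp K k) (int y)) = real K / fact k * real y * (\<Prod>i\<in>{1..<k}. real K * real y - real i)"
    using False by (simp add: bp_def poly_prod fk of_int_prod mult.commute)
  also have "\<dots> = (\<Prod>i=0..<k. real (K*y) - real i) / fact k"
  proof -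
    have "(\<Prod>i=0..<k. real (K*y) - real i) = (real K * real y) * (\<Prod>i\<in>{1..<k}. real (K*y) - real i)"
      using False by (simp add: prod.atLeast_Suc_lessThan del: of_nat_mult) (simp add: of_nat_mult)
    then show ?thesis by simp
  qed
  also have "\<dots> = real (K*y choose k)" by (simp add: real_choose_prod)
  finally show ?thesis by (metis of_int_eq_iff of_int_of_nat_eq)
qed

lemma bp_real:
  "map_poly of_int (bp K k) = (if k = 0 then 1 else
     smult (real_of_int (int K div fact k)) ([:0,1:] * (\<Prod>i\<in>{1..<k}. [:- real i, real K:])))"
  by (rule rpoly_eqI) (simp add: poly_of_int_eval bp_def poly_prod of_int_prod)

lemma bp_real_at0: "poly (map_poly of_int (bp K k)) 0 = (if k = 0 then 1 else (0::real))"
  by (simp add: bp_real)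

lemma bp_real_at1:
  assumes "K > 0"
  shows "poly (map_poly of_int (bp K k)) (1 / real K) = (if k \<le> 1 then 1 else (0::real))"
proof -
  consider "k = 0" | "k = 1" | "k \<ge> 2" by linarith
  then show ?thesis
  proof cases
    case 3
    then have "1 \<in> {1..<k}" by simp
    then have "(\<Prod>i\<in>{1..<k}. poly [:- real i, real K:] (1 / real K)) = 0"
      using assms by (intro prod_zero) auto
    then show ?thesis using 3 by (simp add: bp_real poly_prod)
  qed (use assms in \<open>simp_all add: bp_real\<close>)
qed

lemma kron_coeff:
  fixes H :: "'a::comm_ring_1 poly poly"
  assumes "\<forall>j. degree (coeff H j) < e" "i < e"
  shows "coeff (poly H (monom 1 e)) (e*j + i) = coeff (coeff H j) i"
proof -
  have pw: "monom 1 e ^ t = (monom 1 (e*t) :: 'a poly)" for t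
    by (simp add: monom_power mult.commute)
  have trm: "coeff (coeff H t * monom 1 e ^ t) (e*j + i) =
      (if t = j then coeff (coeff H j) i else 0)" for t
  proof -
    have "coeff (coeff H t * monom 1 e ^ t) (e*j + i) = coeff (monom 1 (e*t) * coeff H t) (e*j+i)"
      by (simp add: pw mult.commute)
    also have "\<dots> = (if e*j + i < e*t then 0 else coeff (coeff H t) (e*j + i - e*t))"
      by (simp add: coeff_monom_mult)
    also have "\<dots> = (if t = j then coeff (coeff H j) i else 0)"
    proof (cases "t = j")
      case True then show ?thesis by simp
    next
      case False
      show ?thesis
      proof (cases "t < j")
        case True
        then have "e*t + e \<le> e*j" 
          by (metis Suc_leI mult.commute mult_Suc mult_le_mono1 add.commute)
        then have "e*j + i - e*t \<ge> e" by linarith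
        then have "coeff (coeff H t) (e*j + i - e*t) = 0"
          using assms(1) by (intro coeff_eq_0) (meson le_less_trans not_le)
        then show ?thesis using False by simp
      next
        case f2: False
        with False have "t \<ge> Suc j" by simp
        then have "e*(Suc j) \<le> e*t" by (rule mult_le_mono2)
        then have "e*j + i < e*t" using assms(2) by simp
        then show ?thesis using False by simp
      qed
    qed
    finally show ?thesis .
  qed
  have "coeff (poly H (monom 1 e)) (e*j + i) = (\<Sum>t\<le>degree H. coeff (coeff H t * monom 1 e ^ t) (e*j + i))"
    by (simp add: poly_altdef coeff_sum)
  also have "\<dots> = (\<Sum>t\<le>degree H. (if t = j then coeff (coeff H j) i else 0))"
    by (simp add: trm)
  also have "\<dots> = coeff (coeff H j) i"
    by (cases "j \<le> degree H") (auto simp: coeff_eq_0)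
  finally show ?thesis .
qed

lemma kron:
  fixes H :: "'a::comm_ring_1 poly poly"
  assumes "e > 0" "\<forall>j. degree (coeff H j) < e" "poly H (monom 1 e) = [:a:]"
  shows "H = [:[:a:]:]"
proof (rule poly_eqI)
  fix j
  show "coeff H j = coeff [:[:a:]:] j"
  proof (rule poly_eqI)
    fix i
    show "coeff (coeff H j) i = coeff (coeff [:[:a:]:] j) i"
    proof (cases "i < e")
      case True
      have "coeff (coeff H j) i = coeff [:a:] (e*j + i)"
        using kron_coeff[OF assms(2) True, of j] assms(3) by simp
      then show ?thesis using assms(1)
        by (cases j; cases i) (simp_all add: coeff_pCons split: nat.splits)
    next
      case False
      then have "coeff (coeff H j) i = 0" using assms(2) 
        by (intro coeff_eq_0) (meson le_less_trans not_le)
      moreover have "i > 0" using False assms(1) by simp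
      ultimately show ?thesis by (cases j; cases i) (simp_all add: coeff_pCons split: nat.splits)
    qed
  qed
qed



definition vals :: "('n \<Rightarrow> int poly) \<Rightarrow> int \<Rightarrow> real^'n" where
  "vals P x = (\<chi> i. real_of_int (poly (P i) x))"

definition gpoly :: "real^'n \<Rightarrow> int^'n^'n \<Rightarrow> ('n \<Rightarrow> int poly) \<Rightarrow> real poly" where
  "gpoly c M P = (\<Sum>i\<in>UNIV. smult (c$i) (\<Sum>j\<in>UNIV. smult (real_of_int (M$i$j)) (map_poly of_int (P j))))"

lemma gpoly_eval: "poly (gpoly c M P) (of_int x) = c \<bullet> (real_mat M *v vals P x)"
  by (simp add: gpoly_def poly_sum inner_vec_def matrix_vector_mult_def real_mat_def vals_def
      poly_of_int_eval sum_distrib_left mult.assoc)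

lemma deg_map_of_int: "degree (map_poly (of_int :: int \<Rightarrow> real) p) = degree p"
  by (simp add: degree_map_poly)

lemma gpoly_degree:
  assumes "\<And>j. degree (P j) \<le> d"
  shows "degree (gpoly c M P) \<le> d"
  unfolding gpoly_def
proof (intro degree_sum_le)
  fix i
  have "degree (\<Sum>j\<in>UNIV. smult (real_of_int (M$i$j)) (map_poly of_int (P j) :: real poly)) \<le> d"
  proof (intro degree_sum_le)
    fix j show "degree (smult (real_of_int (M$i$j)) (map_poly of_int (P j) :: real poly)) \<le> d"
      using degree_smult_le[of "real_of_int (M$i$j)" "map_poly of_int (P j) :: real poly"]
      by (simp add: deg_map_of_int assms)
  qed simp
  then show "degree (smult (c$i) (\<Sum>j\<in>UNIV. smult (real_of_int (M$i$j)) (map_poly of_int (P j)))) \<le> d"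
    using degree_smult_le order.trans by blast
qed simp

lemma vals_step:
  assumes "\<And>i. P' i = (\<Sum>k<D. pcompose (B k) (monom 1 e) * (\<Sum>j\<in>UNIV. smult (M k $ i $ j) (P j)))"
  shows "vals P' x = (\<Sum>k<D. real_of_int (poly (B k) (x^e)) *\<^sub>R (real_mat (M k) *v vals P x))"
  by (simp add: vec_eq_iff assms vals_def poly_sum poly_pcompose poly_monom real_mat_def
      matrix_vector_mult_def sum_distrib_left mult.assoc mult.left_commute)



lemma key_kron:
  fixes g :: "nat \<Rightarrow> real poly" and K D e :: nat
  assumes K: "K > 0" and D: "D \<ge> 2" and e: "e > 0" and dg: "\<And>k. degree (g k) < e"
    and ev: "\<And>x::int. (\<Sum>k<D. real_of_int (poly (bp K k) (x^e)) * poly (g k) (of_int x)) = a"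
  shows "g 0 = [:a:] \<and> g 1 = 0"
proof -
  define Br where "Br k = (map_poly of_int (bp K k) :: real poly)" for k
  define H where "H = (\<Sum>k<D. map_poly (\<lambda>b. [:b:]) (Br k) * [:g k:])"
  have polyH: "poly H q = (\<Sum>k<D. pcompose (Br k) q * g k)" for q
    by (simp add: H_def poly_sum pcompose_altdef mult.commute)
  have coeffH: "coeff H j = (\<Sum>k<D. smult (coeff (Br k) j) (g k))" for j
    by (simp add: H_def coeff_sum coeff_map_poly mult.commute)
  have dH: "\<forall>j. degree (coeff H j) < e"
  proof
    fix j
    show "degree (coeff H j) < e" unfolding coeffH
      by (rule degree_sum_less) (use e dg degree_smult_le le_less_trans in blast)+
  qed
  have "poly H (monom 1 e) = [:a:]"
  proof (rule rpoly_eqI)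
    fix x :: int
    have "poly (poly H (monom 1 e)) (of_int x) =
        (\<Sum>k<D. real_of_int (poly (bp K k) (x^e)) * poly (g k) (of_int x))"
      by (simp add: polyH poly_sum poly_pcompose poly_monom Br_def poly_of_int_eval
          flip: of_int_power)
    then show "poly (poly H (monom 1 e)) (of_int x) = poly [:a:] (of_int x)"
      using ev by simp
  qed
  then have Heq: "H = [:[:a:]:]" using kron[OF e dH] by simp
  have ev0: "poly H [:r:] = (\<Sum>k<D. smult (poly (Br k) r) (g k))" for r
    by (simp add: polyH pcompose_pCons_0)
  have "(\<Sum>k<D. smult (poly (Br k) 0) (g k)) = (\<Sum>k<D. if k = 0 then g k else 0)"
    by (intro sum.cong) (simp_all add: Br_def bp_real_at0)
  also have "\<dots> = g 0" using D by (simp add: sum.delta)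
  finally have g0: "g 0 = [:a:]" using ev0[of 0] Heq by simp
  have "(\<Sum>k<D. smult (poly (Br k) (1 / real K)) (g k)) = (\<Sum>k\<in>{..<D}. if k \<in> {0,1} then g k else 0)"
    by (intro sum.cong) (auto simp: Br_def bp_real_at1[OF K])
  also have "\<dots> = (\<Sum>k\<in>{0,1}. g k)"
  proof -
    have "{..<D} \<inter> {k. k \<in> {0,1}} = {0,1}" using D by auto
    then show ?thesis by (simp add: sum.If_cases)
  qed
  also have "\<dots> = g 0 + g 1" by simp
  finally have "g 0 + g 1 = [:a:]" using ev0[of "1 / real K"] Heq by simp
  with g0 show ?thesis by simp
qed



definition achievable :: "(int^'n^'n) set \<Rightarrow> int^'n \<Rightarrow> ('n \<Rightarrow> int poly) \<Rightarrow> bool" where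
  "achievable G v P \<longleftrightarrow> (\<exists>\<gamma>. \<forall>n\<ge>1. \<gamma> n \<in> G \<and> \<gamma> n *v v = (\<chi> i. poly (P i) (int n)))
      \<and> (\<forall>i. poly (P i) 0 = v$i)"

lemma mp_in: "is_subgroup_GL G \<Longrightarrow> u \<in> G \<Longrightarrow> mp u m \<in> G"
  by (induction m) (auto simp: is_subgroup_GL_def mp_Suc)

lemma real_mat_zero: "real_mat 0 = 0"
  by (simp add: real_mat_def vec_eq_iff)

lemma step:
  assumes sg: "is_subgroup_GL G" and uG: "u \<in> G" and nil: "mp (u - mat 1) D = 0"
    and ach: "achievable G v P"
  shows "\<exists>P'. achievable G v P' \<and>
     (\<forall>c. (\<forall>x. c \<bullet> (vals P' x - rv v) = 0) \<longrightarrow>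
        (\<forall>x. c \<bullet> (vals P x - rv v) = 0) \<and> (\<forall>x. c \<bullet> (real_mat (u - mat 1) *v vals P x) = 0))"
proof -
  obtain \<gamma> where \<gamma>: "\<forall>n\<ge>1. \<gamma> n \<in> G \<and> \<gamma> n *v v = (\<chi> i. poly (P i) (int n))"
    and P0: "\<forall>i. poly (P i) 0 = v$i"
    using ach unfolding achievable_def by blast
  define N where "N = u - mat 1"
  define D2 where "D2 = D + 2"
  have nilD2: "mp N D2 = 0" using mp_zero_ge[OF nil[folded N_def]] by (simp add: D2_def)
  define K :: nat where "K = fact D2"
  have K0: "K > 0" by (simp add: K_def)
  define e where "e = Suc (\<Sum>i\<in>UNIV. degree (P i))"
  have e0: "e > 0" by (simp add: e_def)
  have degP: "degree (P j) \<le> e - 1" for j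
    by (simp add: e_def) (intro member_le_sum; simp)
  define P' where "P' i = (\<Sum>k<D2. pcompose (bp K k) (monom 1 e) * (\<Sum>j\<in>UNIV. smult (mp N k $ i $ j) (P j)))" for i
  have vP': "vals P' x = (\<Sum>k<D2. real_of_int (poly (bp K k) (x^e)) *\<^sub>R (real_mat (mp N k) *v vals P x))" for x
    by (rule vals_step) (simp add: P'_def)
  define \<gamma>' where "\<gamma>' n = mp u (K * n^e) ** \<gamma> n" for n
  have rmu: "real_mat u = mat 1 + real_mat N"
    by (simp add: N_def real_mat_diff real_mat_one)
  have rnil: "mp (real_mat N) D2 = 0" using nilD2 by (simp add: real_mat_zero flip: real_mat_mp)
  have achP': "achievable G v P'"
    unfolding achievable_def
  proof (intro conjI exI allI impI)
    fix n :: nat assume n1: "n \<ge> 1"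
    show "\<gamma>' n \<in> G" using \<gamma> n1 mp_in[OF sg uG] sg unfolding \<gamma>'_def is_subgroup_GL_def by blast
    have "rv (\<gamma>' n *v v) = real_mat (mp u (K * n^e)) *v rv (\<gamma> n *v v)"
      by (simp add: \<gamma>'_def rv_mult flip: matrix_vector_mul_assoc)
    also have "rv (\<gamma> n *v v) = vals P (int n)"
      using \<gamma> n1 by (simp add: rv_def vals_def)
    also have "real_mat (mp u (K * n^e)) *v vals P (int n) =
        (\<Sum>k<D2. real (K * n^e choose k) *\<^sub>R (mp (real_mat N) k *v vals P (int n)))"
      by (simp add: real_mat_mp rmu binom_vec[OF rnil])
    also have "\<dots> = vals P' (int n)"
      unfolding vP'
    proof (intro sum.cong refl)
      fix k assume "k \<in> {..<D2}"
      then have "fact k dvd K" by (simp add: K_def fact_dvd)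
      then have "poly (bp K k) (int n ^ e) = int (K * n^e choose k)"
        using bp_eval[of k K "n^e"] by simp
      then show "real (K * n ^ e choose k) *\<^sub>R (mp (real_mat N) k *v vals P (int n)) =
          real_of_int (poly (bp K k) (int n ^ e)) *\<^sub>R (real_mat (mp N k) *v vals P (int n))"
        by (simp add: real_mat_mp)
    qed
    also have "vals P' (int n) = rv (\<chi> i. poly (P' i) (int n))"
      by (simp add: rv_def vals_def)
    finally show "\<gamma>' n *v v = (\<chi> i. poly (P' i) (int n))" by (rule rv_inj)
  next
    fix i
    have b0: "poly (bp K k) 0 = (if k = 0 then 1 else 0)" for k
      by (simp add: bp_def)
    have "poly (P' i) 0 = (\<Sum>k<D2. (if k = 0 then 1 else 0) * poly (\<Sum>j\<in>UNIV. smult (mp N k $ i $ j) (P j)) 0)"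
      using e0 by (simp add: P'_def poly_sum poly_pcompose poly_monom b0 zero_power)
    also have "\<dots> = poly (\<Sum>j\<in>UNIV. smult (mp N 0 $ i $ j) (P j)) 0"
    proof -
      have "\<And>k. (if k = 0 then 1 else 0) * poly (\<Sum>j\<in>UNIV. smult (mp N k $ i $ j) (P j)) 0 =
          (if k = 0 then poly (\<Sum>j\<in>UNIV. smult (mp N k $ i $ j) (P j)) 0 else 0)" by simp
      then show ?thesis by (simp only: sum.delta) (simp add: D2_def)
    qed
    also have "\<dots> = v$i"
    proof -
      have "\<And>j. poly (smult (mp N 0 $ i $ j) (P j)) 0 = (if j = i then v$i else 0)"
        using P0 by (simp add: mat_def)
      then show ?thesis by (simp add: poly_sum)
    qed
    finally show "poly (P' i) 0 = v$i" .
  qed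
  have key: "(\<forall>x. c \<bullet> (vals P x - rv v) = 0) \<and> (\<forall>x. c \<bullet> (real_mat (u - mat 1) *v vals P x) = 0)"
    if H: "\<forall>x. c \<bullet> (vals P' x - rv v) = 0" for c
  proof -
    define g where "g k = gpoly c (mp N k) P" for k
    have dg: "degree (g k) < e" for k
      using gpoly_degree[of P "e - 1" c "mp N k", OF degP] e0 unfolding g_def by linarith
    have ev: "(\<Sum>k<D2. real_of_int (poly (bp K k) (x^e)) * poly (g k) (of_int x)) = c \<bullet> rv v" for x
    proof -
      have "c \<bullet> vals P' x = c \<bullet> rv v" using H[rule_format, of x] by (simp add: inner_diff_right)
      moreover have "c \<bullet> vals P' x = (\<Sum>k<D2. real_of_int (poly (bp K k) (x^e)) * poly (g k) (of_int x))"
        by (simp add: vP' inner_sum_right g_def gpoly_eval)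
      ultimately show ?thesis by simp
    qed
    have gg: "g 0 = [:c \<bullet> rv v:] \<and> g 1 = 0"
      by (rule key_kron[OF K0 _ e0 dg ev]) (simp add: D2_def)
    show ?thesis
    proof (intro conjI allI)
      fix x
      have "c \<bullet> vals P x = poly (g 0) (of_int x)"
        by (simp add: g_def gpoly_eval real_mat_one)
      then show "c \<bullet> (vals P x - rv v) = 0" using gg by (simp add: inner_diff_right)
      have "c \<bullet> (real_mat N *v vals P x) = poly (g 1) (of_int x)"
        by (simp add: g_def gpoly_eval mp_Suc)
      then show "c \<bullet> (real_mat (u - mat 1) *v vals P x) = 0" using gg by (simp add: N_def)
    qed
  qed
  show ?thesis using achP' key by blast
qed



lemma sep:
  fixes y :: "real^'n"
  assumes "\<forall>c. (\<forall>s\<in>A. c \<bullet> s = 0) \<longrightarrow> c \<bullet> y = 0"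
  shows "y \<in> span A"
proof (rule ccontr)
  assume ny: "y \<notin> span A"
  have "span A \<subset> span (insert y A)"
    using ny by (metis insertI1 psubsetI span_base span_mono subset_insertI)
  then obtain x where x: "x \<noteq> 0" "x \<in> span (insert y A)" "\<And>z. z \<in> span A \<Longrightarrow> orthogonal x z"
    using orthogonal_to_subspace_exists_gen by metis
  have "\<forall>s\<in>A. x \<bullet> s = 0" using x(3) span_base unfolding orthogonal_def by blast
  then have "x \<bullet> y = 0" using assms by blast
  then have "\<And>z. z \<in> insert y A \<Longrightarrow> orthogonal x z"
    using x(3) span_base unfolding orthogonal_def by blast
  then have "orthogonal x x" using orthogonal_to_span[OF x(2)] by blast
  then show False using x(1) orthogonal_self by blast
qed

lemma inv_in:
  assumes "A \<in> GL_int" "A ** B = mat 1" "A ** C = mat 1"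
  shows "B = C"
proof -
  obtain B0 where "A ** B0 = mat 1" "B0 ** A = mat 1" using assms(1) by (auto simp: GL_int_def)
  then have "B0 = B" "B0 = C" using assms
    by (metis matrix_mul_assoc matrix_mul_lid matrix_mul_rid)+
  then show ?thesis by simp
qed

lemma group_pres:
  fixes G :: "(int^'n^'n) set" and X :: "(real^'n) set"
  assumes sg: "is_subgroup_GL G" and GS: "G = generated_GL S" and X: "subspace X"
    and SX: "\<forall>s\<in>S. \<forall>w\<in>X. real_mat s *v w \<in> X"
  shows "\<forall>g\<in>G. \<forall>w\<in>X. real_mat g *v w \<in> X"
proof -
  define pres where "pres A \<longleftrightarrow> (\<forall>w\<in>X. real_mat A *v w \<in> X)" for A :: "int^'n^'n"
  define Hs where "Hs = {A \<in> G. pres A \<and> (\<forall>B. A ** B = mat 1 \<longrightarrow> pres B)}"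
  have GGL: "G \<subseteq> GL_int" using sg by (simp add: is_subgroup_GL_def)
  have SG: "S \<subseteq> G" unfolding GS generated_GL_def by blast
  have pres_mult: "pres A \<Longrightarrow> pres B \<Longrightarrow> pres (A ** B)" for A B
    by (simp add: pres_def real_mat_mult flip: matrix_vector_mul_assoc)
  have sub: "is_subgroup_GL Hs"
    unfolding is_subgroup_GL_def
  proof (intro conjI ballI)
    show "Hs \<subseteq> GL_int" using GGL by (auto simp: Hs_def)
    have "pres (mat 1)" by (simp add: pres_def real_mat_one)
    then show "mat 1 \<in> Hs" using sg by (auto simp: Hs_def is_subgroup_GL_def matrix_mul_lid)
  next
    fix A B assume A: "A \<in> Hs" and B: "B \<in> Hs"
    obtain A' where A': "A' \<in> G" "A ** A' = mat 1" "A' ** A = mat 1"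
      using A sg by (auto simp: Hs_def is_subgroup_GL_def)
    obtain B' where B': "B' \<in> G" "B ** B' = mat 1" "B' ** B = mat 1"
      using B sg by (auto simp: Hs_def is_subgroup_GL_def)
    have AB: "A ** B \<in> G" using A B sg by (auto simp: Hs_def is_subgroup_GL_def)
    have "pres (A ** B)" using A B pres_mult by (auto simp: Hs_def)
    moreover have "pres C" if C: "(A ** B) ** C = mat 1" for C
    proof -
      have i: "(A ** B) ** (B' ** A') = mat 1"
        by (metis A'(2) B'(2) matrix_mul_assoc matrix_mul_lid)
      have "C = B' ** A'" using inv_in[OF _ C i] AB GGL by blast
      moreover have "pres B'" "pres A'" using A' B' A B by (auto simp: Hs_def)
      ultimately show ?thesis using pres_mult by simp
    qed
    ultimately show "A ** B \<in> Hs" using AB by (auto simp: Hs_def)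
  next
    fix A assume A: "A \<in> Hs"
    obtain A' where A': "A' \<in> G" "A ** A' = mat 1" "A' ** A = mat 1"
      using A sg by (auto simp: Hs_def is_subgroup_GL_def)
    have "pres A'" using A A' by (auto simp: Hs_def)
    moreover have "pres C" if C: "A' ** C = mat 1" for C
    proof -
      have "C = A" using inv_in[OF _ C A'(3)] A'(1) GGL by blast
      then show ?thesis using A by (simp add: Hs_def)
    qed
    ultimately have "A' \<in> Hs" using A' by (auto simp: Hs_def)
    then show "\<exists>B\<in>Hs. A ** B = mat 1 \<and> B ** A = mat 1" using A' by blast
  qed
  have "S \<subseteq> Hs"
  proof
    fix s assume s: "s \<in> S"
    have sG: "s \<in> G" using s SG by blast
    have ps: "pres s" using SX s by (simp add: pres_def)
    have "pres B" if B: "s ** B = mat 1" for B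
    proof -
      obtain s' where s': "s' \<in> G" "s ** s' = mat 1" "s' ** s = mat 1"
        using sG sg by (auto simp: is_subgroup_GL_def)
      have "B = s'" using inv_in[OF _ B s'(2)] sG GGL by blast
      then have Bs: "real_mat B ** real_mat s = mat 1" using s'(3) by (simp add: real_mat_one flip: real_mat_mult)
      define f where "f = (\<lambda>w. real_mat s *v w)"
      have lf: "linear f" by (simp add: f_def matrix_vector_mul_linear)
      have inj: "inj f"
        by (rule injI) (metis Bs f_def matrix_vector_mul_assoc matrix_vector_mul_lid)
      have fX: "f ` X \<subseteq> X" using ps by (auto simp: pres_def f_def)
      have "dim (f ` X) = dim X" using dim_image_eq[OF lf] inj by (simp add: inj_on_def)
      then have eq: "f ` X = X"
        using subspace_dim_equal[OF linear_subspace_image[OF lf X] X fX] by simp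
      show ?thesis unfolding pres_def
      proof
        fix w assume "w \<in> X"
        then obtain w' where w': "w' \<in> X" "w = f w'" using eq by blast
        have "real_mat B *v w = w'"
          using w' Bs by (simp add: f_def matrix_vector_mul_assoc)
        then show "real_mat B *v w \<in> X" using w' by simp
      qed
    qed
    then show "s \<in> Hs" using sG ps by (simp add: Hs_def)
  qed
  then have "G \<subseteq> Hs" unfolding GS generated_GL_def using sub by blast
  then show ?thesis by (auto simp: Hs_def pres_def)
qed



theorem theorem2p1:
  fixes \<Gamma> :: "(int^'n^'n) set"
  assumes "CARD('n) \<ge> 2"
    and "is_subgroup_GL \<Gamma>"
    and "irreducible_action \<Gamma>"
    and "\<exists>S. finite S \<and> (\<forall>A\<in>S. unipotent A) \<and> \<Gamma> = generated_GL S"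
    and "v \<noteq> (0::int^'n)"
  shows "\<exists>(\<gamma>::nat \<Rightarrow> int^'n^'n) (p::'n \<Rightarrow> int poly).
           (\<forall>n\<ge>1. \<gamma> n \<in> \<Gamma> \<and> \<gamma> n *v v = (\<chi> i. poly (p i) (int n))) \<and>
           (\<forall>(c0::real) (c::'n \<Rightarrow> real).
              [:c0:] + (\<Sum>i\<in>UNIV. smult (c i) (map_poly of_int (p i))) = 0
              \<longrightarrow> c0 = 0 \<and> (\<forall>i. c i = 0))"
proof -
  note card2 = assms(1) and sg = assms(2) and irr = assms(3) and v0 = assms(5)
  obtain S where S: "\<forall>A\<in>S. unipotent A" "\<Gamma> = generated_GL S" using assms(4) by blast
  have SG: "S \<subseteq> \<Gamma>" unfolding S(2) generated_GL_def by blast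
  define Rs where "Rs P = span (range (\<lambda>x. vals P x - rv v))" for P
  have dimb: "dim (Rs P) < CARD('n) + 1" for P
    using dim_subset_UNIV[of "Rs P"] by simp
  have ach0: "achievable \<Gamma> v (\<lambda>i. [:v$i:])"
    unfolding achievable_def
    by (rule conjI, rule exI[of _ "\<lambda>n. mat 1"]) (use sg in \<open>auto simp: is_subgroup_GL_def vec_eq_iff\<close>)
  obtain P where P: "achievable \<Gamma> v P" and Pmax: "\<forall>Q. achievable \<Gamma> v Q \<longrightarrow> dim (Rs Q) \<le> dim (Rs P)"
    using ex_has_greatest_nat[of "achievable \<Gamma> v" _ "\<lambda>P. dim (Rs P)" "CARD('n) + 1", OF ach0] dimb by blast
  obtain \<gamma> where \<gamma>: "\<forall>n\<ge>1. \<gamma> n \<in> \<Gamma> \<and> \<gamma> n *v v = (\<chi> i. poly (P i) (int n))"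
    and P0: "\<forall>i. poly (P i) 0 = v$i"
    using P unfolding achievable_def by blast
  have vP0: "vals P 0 = rv v" using P0 by (simp add: vals_def rv_def vec_eq_iff)
  define R where "R = Rs P"
  have subR: "subspace R" by (simp add: R_def Rs_def)
  have NR: "real_mat (u - mat 1) *v vals P x \<in> R" if u: "u \<in> S" for u x
  proof -
    obtain D where D: "mp (u - mat 1) D = 0" using S(1) u by (auto simp: unipotent_mp)
    obtain P' where P': "achievable \<Gamma> v P'"
      and k: "\<forall>c. (\<forall>x. c \<bullet> (vals P' x - rv v) = 0) \<longrightarrow>
        (\<forall>x. c \<bullet> (vals P x - rv v) = 0) \<and> (\<forall>x. c \<bullet> (real_mat (u - mat 1) *v vals P x) = 0)"
      using step[OF sg _ D P] u SG by blast
    have gen: "\<forall>c. (\<forall>s\<in>range (\<lambda>x. vals P' x - rv v). c \<bullet> s = 0) \<longrightarrow> c \<bullet> y = 0"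
      if "y \<in> range (\<lambda>x. vals P x - rv v) \<or> y \<in> range (\<lambda>x. real_mat (u - mat 1) *v vals P x)" for y
      using k that by blast
    have "R \<subseteq> Rs P'" unfolding R_def Rs_def
    proof (rule span_minimal)
      show "range (\<lambda>x. vals P x - rv v) \<subseteq> span (range (\<lambda>x. vals P' x - rv v))"
      proof clarify
        fix x
        show "vals P x - rv v \<in> span (range (\<lambda>x. vals P' x - rv v))"
          by (rule sep) (use gen[of "vals P x - rv v"] in blast)
      qed
    qed simp
    moreover have "dim (Rs P') \<le> dim R" using Pmax P' by (simp add: R_def)
    ultimately have eq: "R = Rs P'"
      using subspace_dim_equal[OF subR _ \<open>R \<subseteq> Rs P'\<close>] by (simp add: Rs_def)
    have "real_mat (u - mat 1) *v vals P x \<in> Rs P'" unfolding Rs_def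
      by (rule sep) (use gen[of "real_mat (u - mat 1) *v vals P x"] in blast)
    then show ?thesis using eq by simp
  qed
  have NRv: "real_mat (u - mat 1) *v w \<in> R" if u: "u \<in> S" and w: "w \<in> R" for u w
  proof -
    have lf: "linear (\<lambda>w. real_mat (u - mat 1) *v w)" by (simp add: matrix_vector_mul_linear)
    have "(\<lambda>w. real_mat (u - mat 1) *v w) ` range (\<lambda>x. vals P x - rv v) \<subseteq> R"
    proof clarify
      fix x
      have "real_mat (u - mat 1) *v (vals P x - rv v) =
          real_mat (u - mat 1) *v vals P x - real_mat (u - mat 1) *v vals P 0"
        by (simp add: vP0 vec.diff)
      then show "real_mat (u - mat 1) *v (vals P x - rv v) \<in> R"
        using NR[OF u, of x] NR[OF u, of 0] subR by (simp add: subspace_diff)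
    qed
    then have "span ((\<lambda>w. real_mat (u - mat 1) *v w) ` range (\<lambda>x. vals P x - rv v)) \<subseteq> R"
      using subR by (simp add: span_minimal)
    then show ?thesis using w linear_span_image[OF lf] unfolding R_def Rs_def by blast
  qed
  have umat: "real_mat u *v w = w + real_mat (u - mat 1) *v w" for u w
    by (simp add: real_mat_diff real_mat_one matrix_vector_mult_diff_rdistrib)
  have Rinv: "\<forall>g\<in>\<Gamma>. \<forall>w\<in>R. real_mat g *v w \<in> R"
  proof (rule group_pres[OF sg S(2) subR], intro ballI)
    fix s w assume "s \<in> S" "w \<in> R"
    then show "real_mat s *v w \<in> R"
      using NRv[of s w] umat[of s w] subR subspace_add by metis
  qed
  define W where "W = span (insert (rv v) R)"
  have subW: "subspace W" by (simp add: W_def)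
  have RW: "R \<subseteq> W" unfolding W_def using span_superset by blast
  have Winv0: "real_mat u *v w \<in> W" if u: "u \<in> S" and w: "w \<in> W" for u w
  proof -
    have lf: "linear (\<lambda>w. real_mat u *v w)" by (simp add: matrix_vector_mul_linear)
    have "(\<lambda>w. real_mat u *v w) ` insert (rv v) R \<subseteq> W"
    proof
      fix y assume "y \<in> (\<lambda>w. real_mat u *v w) ` insert (rv v) R"
      then obtain z where z: "z \<in> insert (rv v) R" "y = real_mat u *v z" by blast
      show "y \<in> W"
      proof (cases "z = rv v")
        case True
        have "real_mat (u - mat 1) *v rv v \<in> R" using NR[OF u, of 0] vP0 by simp
        then have "real_mat (u - mat 1) *v rv v \<in> W" using RW by blast
        moreover have "rv v \<in> W" by (simp add: W_def span_base)
        ultimately show ?thesis using z True umat[of u "rv v"] subW subspace_add by metis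
      next
        case False
        then have "z \<in> R" using z by blast
        then have "real_mat u *v z \<in> R" using NRv[OF u] umat[of u z] subR subspace_add by metis
        then show ?thesis using z RW by blast
      qed
    qed
    then have "span ((\<lambda>w. real_mat u *v w) ` insert (rv v) R) \<subseteq> W"
      using subW by (simp add: span_minimal)
    then show ?thesis using w linear_span_image[OF lf] unfolding W_def by blast
  qed
  have Winv: "\<forall>g\<in>\<Gamma>. \<forall>w\<in>W. real_mat g *v w \<in> W"
    by (rule group_pres[OF sg S(2) subW]) (use Winv0 in blast)
  have Ropts: "R = {0} \<or> R = UNIV" using irr Rinv subR unfolding irreducible_action_def by blast
  have Wopts: "W = {0} \<or> W = UNIV" using irr Winv subW unfolding irreducible_action_def by blast
  have rv0: "rv v \<noteq> 0"
  proof
    assume "rv v = 0"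
    then have "rv v = rv 0" by (simp add: rv_def vec_eq_iff)
    then show False using rv_inj v0 by blast
  qed
  have RU: "R = UNIV"
  proof (rule ccontr)
    assume "R \<noteq> UNIV"
    then have R0: "R = {0}" using Ropts by blast
    have "rv v \<in> W" unfolding W_def by (rule span_base) simp
    then have "W \<noteq> {0}" using rv0 by blast
    then have WU: "W = UNIV" using Wopts by blast
    have "W \<subseteq> span {rv v}" unfolding W_def
    proof (rule span_minimal)
      show "insert (rv v) R \<subseteq> span {rv v}" using R0 span_base[of "rv v" "{rv v}"] span_zero by auto
    qed simp
    then have "dim W \<le> card {rv v}" using dim_le_card by blast
    then have "CARD('n) \<le> 1" using WU by simp
    then show False using card2 by simp
  qed
  show ?thesis
  proof (rule exI[of _ \<gamma>], rule exI[of _ P], rule conjI)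
    show "\<forall>n\<ge>1. \<gamma> n \<in> \<Gamma> \<and> \<gamma> n *v v = (\<chi> i. poly (P i) (int n))" using \<gamma> .
  next
    show "\<forall>(c0::real) (c::'n \<Rightarrow> real).
              [:c0:] + (\<Sum>i\<in>UNIV. smult (c i) (map_poly of_int (P i))) = 0
              \<longrightarrow> c0 = 0 \<and> (\<forall>i. c i = 0)"
    proof (intro allI impI)
    fix c0 :: real and c :: "'n \<Rightarrow> real"
    assume H: "[:c0:] + (\<Sum>i\<in>UNIV. smult (c i) (map_poly of_int (P i))) = 0"
    define cv where "cv = (\<chi> i. c i)"
    have ev: "c0 + cv \<bullet> vals P x = 0" for x
    proof -
      have "poly ([:c0:] + (\<Sum>i\<in>UNIV. smult (c i) (map_poly of_int (P i)))) (of_int x) = 0"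
        using H by simp
      then show ?thesis by (simp add: poly_sum poly_of_int_eval cv_def vals_def inner_vec_def)
    qed
    have orth: "cv \<bullet> y = 0" if yin: "y \<in> range (\<lambda>x. vals P x - rv v)" for y
    proof -
      obtain x where y: "y = vals P x - rv v" using yin by blast
      have "c0 + cv \<bullet> vals P x = 0" "c0 + cv \<bullet> rv v = 0" using ev[of x] ev[of 0] vP0 by auto
      then show ?thesis using y by (simp add: inner_diff_right)
    qed
    have "orthogonal cv cv"
      using orthogonal_to_span[of cv "range (\<lambda>x. vals P x - rv v)" cv] RU orth
      unfolding R_def Rs_def orthogonal_def by blast
    then have cv0: "cv = 0" by (simp add: orthogonal_self)
    have "c0 = 0" using ev[of 0] cv0 by simp
    moreover have "\<forall>i. c i = 0" using cv0 by (simp add: cv_def vec_eq_iff)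
    ultimately show "c0 = 0 \<and> (\<forall>i. c i = 0)" by simp
    qed
  qed
qed

end
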